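(* Let $(\bar{A}_{\tau,\sigma},\bar{B}_\tau,B_\tau,C_\tau)$ be csRKN coefficients satisfying, for all $\tau,\sigma\in[0,1]$, $$C_\tau=1-C_{1-\tau},\ \ \bar{A}_{\tau,\sigma}=B_{1-\sigma}(1-C_{1-\tau})-\bar{B}_{1-\sigma}+\bar{A}_{1-\tau,1-\sigma},\ \ \bar{B}_\tau=B_{1-\tau}-\bar{B}_{1-\tau},\ \ B_\tau=B_{1-\tau}.$$ Let $(b_i,c_i)_{i=1}^s$ be a quadrature formula on $[0,1]$ (weights $b_i$, nodes $c_i$) with $b_{s+1-i}=b_i$ and $c_{s+1-i}=1-c_i$ for all $i$. Then the $s$-stage RKN method with coefficients $$\bar{a}_{ij}=b_j\bar{A}_{c_i,c_j},\quad \bar{b}_i=b_i\bar{B}_{c_i},\quad \hat b_i=b_iB_{c_i},\quad \hat c_i=C_{c_i}\qquad(i,j=1,\dots,s)$$ is symmetric.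
   Context: For $q''=f(t,q)$ with smooth $f:\mathbb{R}\times\mathbb{R}^d\to\mathbb{R}^d$, an $s$-stage RKN method with coefficients $(\bar a_{ij},\bar b_i,\hat b_i,\hat c_i)$ and step size $h$ is $$Q_i=q_0+h\hat c_iq'_0+h^2\sum_{j=1}^s\bar a_{ij}f(t_0+\hat c_jh,Q_j),\ i=1,\dots,s,$$ $$q_1=q_0+hq'_0+h^2\sum_{i=1}^s\bar b_if(t_0+\hat c_ih,Q_i),\qquad q'_1=q'_0+h\sum_{i=1}^s\hat b_if(t_0+\hat c_ih,Q_i).$$ A one-step method $\Phi_h$ is symmetric if $\Phi_h=\Phi_{-h}^{-1}$, i.e. exchanging $h\leftrightarrow-h$, $(q_0,q_0')\leftrightarrow(q_1,q_1')$, $t_0\leftrightarrow t_1=t_0+h$ leaves the method unaltered. *)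

theory Defs
  imports "HOL-Analysis.Analysis"
begin

text \<open>One step of the s-stage RKN method (coefficients abar, bbar, bhat, chat, stages indexed 1..s)
  applied to q'' = f(t,q) with step h from (t0, q0, p0) to (q1, p1), where p denotes q'.
  Since the method is in general implicit, a step is a relation: there exist stage values Q
  satisfying the stage equations and producing (q1, p1).\<close>
definition rkn_step ::
  "nat \<Rightarrow> (nat \<Rightarrow> nat \<Rightarrow> real) \<Rightarrow> (nat \<Rightarrow> real) \<Rightarrow> (nat \<Rightarrow> real) \<Rightarrow> (nat \<Rightarrow> real)
   \<Rightarrow> (real \<Rightarrow> 'a::real_vector \<Rightarrow> 'a) \<Rightarrow> real \<Rightarrow> real \<Rightarrow> 'a \<Rightarrow> 'a \<Rightarrow> 'a \<Rightarrow> 'a \<Rightarrow> bool" where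
  "rkn_step s abar bbar bhat chat f h t0 q0 p0 q1 p1 \<longleftrightarrow>
     (\<exists>Q :: nat \<Rightarrow> 'a.
        (\<forall>i\<in>{1..s}. Q i = q0 + (h * chat i) *\<^sub>R p0
             + (h^2) *\<^sub>R (\<Sum>j=1..s. abar i j *\<^sub>R f (t0 + chat j * h) (Q j))) \<and>
        q1 = q0 + h *\<^sub>R p0 + (h^2) *\<^sub>R (\<Sum>i=1..s. bbar i *\<^sub>R f (t0 + chat i * h) (Q i)) \<and>
        p1 = p0 + h *\<^sub>R (\<Sum>i=1..s. bhat i *\<^sub>R f (t0 + chat i * h) (Q i)))"

definition rkn_symmetric_for ::
  "nat \<Rightarrow> (nat \<Rightarrow> nat \<Rightarrow> real) \<Rightarrow> (nat \<Rightarrow> real) \<Rightarrow> (nat \<Rightarrow> real) \<Rightarrow> (nat \<Rightarrow> real)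
   \<Rightarrow> (real \<Rightarrow> 'a::real_vector \<Rightarrow> 'a) \<Rightarrow> bool" where
  "rkn_symmetric_for s abar bbar bhat chat f \<longleftrightarrow>
     (\<forall>h t0 q0 p0 q1 p1.
        rkn_step s abar bbar bhat chat f h t0 q0 p0 q1 p1 \<longleftrightarrow>
        rkn_step s abar bbar bhat chat f (-h) (t0 + h) q1 p1 q0 p0)"

end

theory Submission
  imports Defs
begin

lemma sum_rev_1s:
  fixes g :: "nat \<Rightarrow> 'a::comm_monoid_add"
  shows "(\<Sum>k=1..s. g k) = (\<Sum>k=1..s. g (s + 1 - k))"
  by (rule sum.reindex_bij_witness[where i="\<lambda>k. s + 1 - k" and j="\<lambda>k. s + 1 - k"]) auto

lemma gen_sym:
  fixes f :: "real \<Rightarrow> 'a::real_vector \<Rightarrow> 'a"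
    and a :: "nat \<Rightarrow> nat \<Rightarrow> real" and bb bh ch :: "nat \<Rightarrow> real"
  assumes c1: "\<And>i. i \<in> {1..s} \<Longrightarrow> ch (s + 1 - i) = 1 - ch i"
    and ca: "\<And>i k. i \<in> {1..s} \<Longrightarrow> k \<in> {1..s} \<Longrightarrow>
          a (s + 1 - i) k = bb k - ch i * bh k + a i (s + 1 - k)"
    and cbb: "\<And>k. k \<in> {1..s} \<Longrightarrow> bb k - bh k + bb (s + 1 - k) = 0"
    and cbh: "\<And>k. k \<in> {1..s} \<Longrightarrow> bh (s + 1 - k) = bh k"
    and st: "rkn_step s a bb bh ch f h t0 q0 p0 q1 p1"
  shows "rkn_step s a bb bh ch f (-h) (t0 + h) q1 p1 q0 p0"
proof -
  obtain Q where
    hQ: "\<forall>i\<in>{1..s}. Q i = q0 + (h * ch i) *\<^sub>R p0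
             + (h^2) *\<^sub>R (\<Sum>j=1..s. a i j *\<^sub>R f (t0 + ch j * h) (Q j))" and
    hq1: "q1 = q0 + h *\<^sub>R p0 + (h^2) *\<^sub>R (\<Sum>i=1..s. bb i *\<^sub>R f (t0 + ch i * h) (Q i))" and
    hp1: "p1 = p0 + h *\<^sub>R (\<Sum>i=1..s. bh i *\<^sub>R f (t0 + ch i * h) (Q i))"
    using st unfolding rkn_step_def by blast
  define F where "F k = f (t0 + ch k * h) (Q k)" for k
  define \<sigma> where "\<sigma> k = s + 1 - k" for k
  have sig: "k \<in> {1..s} \<Longrightarrow> \<sigma> k \<in> {1..s} \<and> \<sigma> (\<sigma> k) = k" for k
    unfolding \<sigma>_def by auto
  have tF: "f (t0 + h + ch j * (-h)) (Q (\<sigma> j)) = F (\<sigma> j)" if "j \<in> {1..s}" for j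
  proof -
    have e: "ch (\<sigma> j) = 1 - ch j" using c1[OF that] unfolding \<sigma>_def by simp
    have "t0 + h + ch j * (-h) = t0 + ch (\<sigma> j) * h"
      unfolding e by (simp add: algebra_simps)
    thus ?thesis unfolding F_def by metis
  qed
  have rs: "(\<Sum>j=1..s. g (f (t0 + h + ch j * (-h)) (Q (\<sigma> j))) j) = (\<Sum>k=1..s. g (F k) (\<sigma> k))"
    for g :: "'a \<Rightarrow> nat \<Rightarrow> 'a"
  proof -
    have "(\<Sum>j=1..s. g (f (t0 + h + ch j * (-h)) (Q (\<sigma> j))) j) = (\<Sum>j=1..s. g (F (\<sigma> j)) j)"
      using tF by (intro sum.cong) auto
    also have "\<dots> = (\<Sum>k=1..s. g (F (\<sigma> (\<sigma> k))) (\<sigma> k))"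
      by (subst sum_rev_1s) (simp add: \<sigma>_def)
    also have "\<dots> = (\<Sum>k=1..s. g (F k) (\<sigma> k))"
      using sig by (intro sum.cong) auto
    finally show ?thesis .
  qed
  define B1 where "B1 = (\<Sum>k=1..s. bb k *\<^sub>R F k)"
  define B2 where "B2 = (\<Sum>k=1..s. bh k *\<^sub>R F k)"
  have q1': "q1 = q0 + h *\<^sub>R p0 + (h^2) *\<^sub>R B1" using hq1 unfolding B1_def F_def by simp
  have p1': "p1 = p0 + h *\<^sub>R B2" using hp1 unfolding B2_def F_def by simp
  show ?thesis unfolding rkn_step_def
  proof (intro exI[of _ "\<lambda>i. Q (\<sigma> i)"] conjI ballI)
    fix i assume i: "i \<in> {1..s}"
    define A where "A = (\<Sum>k=1..s. a i (\<sigma> k) *\<^sub>R F k)"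
    have r1: "(\<Sum>j=1..s. a i j *\<^sub>R f (t0 + h + ch j * (-h)) (Q (\<sigma> j))) = A"
      unfolding A_def using rs[of "\<lambda>x j. a i j *\<^sub>R x"] by simp
    have si: "\<sigma> i \<in> {1..s}" using sig i by blast
    have e: "ch (\<sigma> i) = 1 - ch i" using c1[OF i] unfolding \<sigma>_def by simp
    have "(\<Sum>k=1..s. a (\<sigma> i) k *\<^sub>R F k) = (\<Sum>k=1..s. bb k *\<^sub>R F k - ch i *\<^sub>R (bh k *\<^sub>R F k) + a i (\<sigma> k) *\<^sub>R F k)"
    proof (intro sum.cong refl)
      fix k assume k: "k \<in> {1..s}"
      show "a (\<sigma> i) k *\<^sub>R F k = bb k *\<^sub>R F k - ch i *\<^sub>R (bh k *\<^sub>R F k) + a i (\<sigma> k) *\<^sub>R F k"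
        unfolding \<sigma>_def ca[OF i k] by (simp add: scaleR_add_left scaleR_diff_left)
    qed
    also have "\<dots> = B1 - ch i *\<^sub>R B2 + A"
      unfolding B1_def B2_def A_def by (simp add: sum.distrib sum_subtractf scaleR_sum_right)
    finally have sA: "(\<Sum>k=1..s. a (\<sigma> i) k *\<^sub>R F k) = B1 - ch i *\<^sub>R B2 + A" .
    have Qs: "Q (\<sigma> i) = q0 + (h * ch (\<sigma> i)) *\<^sub>R p0 + (h^2) *\<^sub>R (\<Sum>k=1..s. a (\<sigma> i) k *\<^sub>R F k)"
      using hQ si unfolding F_def by simp
    show "Q (\<sigma> i) = q1 + (- h * ch i) *\<^sub>R p1 +
          (- h)\<^sup>2 *\<^sub>R (\<Sum>j = 1..s. a i j *\<^sub>R f (t0 + h + ch j * - h) (Q (\<sigma> j)))"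
      unfolding r1 Qs sA e q1' p1'
      by (simp add: scaleR_add_right scaleR_diff_right scaleR_diff_left scaleR_add_left power2_eq_square algebra_simps)
  next
    have "(\<Sum>i = 1..s. bb i *\<^sub>R f (t0 + h + ch i * - h) (Q (\<sigma> i))) = (\<Sum>k=1..s. bb (\<sigma> k) *\<^sub>R F k)"
      using rs[of "\<lambda>x j. bb j *\<^sub>R x"] by simp
    also have "\<dots> = (\<Sum>k=1..s. bh k *\<^sub>R F k - bb k *\<^sub>R F k)"
    proof (intro sum.cong refl)
      fix k assume k: "k \<in> {1..s}"
      have "bb (\<sigma> k) = bh k - bb k" unfolding \<sigma>_def using cbb[OF k] by linarith
      thus "bb (\<sigma> k) *\<^sub>R F k = bh k *\<^sub>R F k - bb k *\<^sub>R F k" by (simp add: scaleR_diff_left)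
    qed
    also have "\<dots> = B2 - B1" unfolding B1_def B2_def by (simp add: sum_subtractf)
    finally have e: "(\<Sum>i = 1..s. bb i *\<^sub>R f (t0 + h + ch i * - h) (Q (\<sigma> i))) = B2 - B1" .
    show "q0 = q1 + - h *\<^sub>R p1 + (- h)\<^sup>2 *\<^sub>R (\<Sum>i = 1..s. bb i *\<^sub>R f (t0 + h + ch i * - h) (Q (\<sigma> i)))"
      unfolding e q1' p1' by (simp add: scaleR_add_right scaleR_diff_right power2_eq_square algebra_simps)
  next
    have "(\<Sum>i = 1..s. bh i *\<^sub>R f (t0 + h + ch i * - h) (Q (\<sigma> i))) = (\<Sum>k=1..s. bh (\<sigma> k) *\<^sub>R F k)"
      using rs[of "\<lambda>x j. bh j *\<^sub>R x"] by simp
    also have "\<dots> = B2"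
      using cbh unfolding \<sigma>_def B2_def by (intro sum.cong) auto
    finally have e: "(\<Sum>i = 1..s. bh i *\<^sub>R f (t0 + h + ch i * - h) (Q (\<sigma> i))) = B2" .
    show "p0 = p1 + - h *\<^sub>R (\<Sum>i = 1..s. bh i *\<^sub>R f (t0 + h + ch i * - h) (Q (\<sigma> i)))"
      unfolding e p1' by simp
  qed
qed

theorem theorem4p1:
  fixes Abar :: "real \<Rightarrow> real \<Rightarrow> real" and Bbar B C :: "real \<Rightarrow> real"
    and s :: nat and b c :: "nat \<Rightarrow> real"
  assumes hC: "\<And>\<tau>. \<tau> \<in> {0..1} \<Longrightarrow> C \<tau> = 1 - C (1 - \<tau>)"
    and hA: "\<And>\<tau> \<sigma>. \<tau> \<in> {0..1} \<Longrightarrow> \<sigma> \<in> {0..1} \<Longrightarrow>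
             Abar \<tau> \<sigma> = B (1 - \<sigma>) * (1 - C (1 - \<tau>)) - Bbar (1 - \<sigma>) + Abar (1 - \<tau>) (1 - \<sigma>)"
    and hBbar: "\<And>\<tau>. \<tau> \<in> {0..1} \<Longrightarrow> Bbar \<tau> = B (1 - \<tau>) - Bbar (1 - \<tau>)"
    and hB: "\<And>\<tau>. \<tau> \<in> {0..1} \<Longrightarrow> B \<tau> = B (1 - \<tau>)"
    and nodes: "\<And>i. i \<in> {1..s} \<Longrightarrow> c i \<in> {0..1}"
    and symb: "\<And>i. i \<in> {1..s} \<Longrightarrow> b (s + 1 - i) = b i"
    and symc: "\<And>i. i \<in> {1..s} \<Longrightarrow> c (s + 1 - i) = 1 - c i"
  shows "\<forall>f :: real \<Rightarrow> real^'d \<Rightarrow> real^'d.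
           rkn_symmetric_for s (\<lambda>i j. b j * Abar (c i) (c j)) (\<lambda>i. b i * Bbar (c i))
             (\<lambda>i. b i * B (c i)) (\<lambda>i. C (c i)) f"
proof -
  have c1: "C (c (s + 1 - i)) = 1 - C (c i)" if i: "i \<in> {1..s}" for i
    using hC[OF nodes[OF i]] symc[OF i] by simp
  have ca: "b k * Abar (c (s + 1 - i)) (c k) = b k * Bbar (c k) - C (c i) * (b k * B (c k))
        + b (s + 1 - k) * Abar (c i) (c (s + 1 - k))"
    if i: "i \<in> {1..s}" and k: "k \<in> {1..s}" for i k
  proof -
    have ci: "c i \<in> {0..1}" and ck: "c k \<in> {0..1}" using nodes i k by auto
    have ci': "1 - c i \<in> {0..1}" using ci by auto
    have "Abar (1 - c i) (c k) = B (1 - c k) * (1 - C (c i)) - Bbar (1 - c k) + Abar (c i) (1 - c k)"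
      using hA[OF ci' ck] by simp
    moreover have "Bbar (c k) = B (1 - c k) - Bbar (1 - c k)" using hBbar[OF ck] .
    moreover have "B (c k) = B (1 - c k)" using hB[OF ck] .
    ultimately have "Abar (1 - c i) (c k) = Bbar (c k) - C (c i) * B (c k) + Abar (c i) (1 - c k)"
      by (simp add: algebra_simps)
    then show ?thesis unfolding symc[OF i] symc[OF k] symb[OF k] by (simp add: right_diff_distrib distrib_left)
  qed
  have cbb: "b k * Bbar (c k) - b k * B (c k) + b (s + 1 - k) * Bbar (c (s + 1 - k)) = 0"
    if k: "k \<in> {1..s}" for k
  proof -
    have ck: "c k \<in> {0..1}" using nodes k by auto
    show ?thesis unfolding symc[OF k] symb[OF k] using hBbar[OF ck] hB[OF ck] by (simp add: right_diff_distrib flip: distrib_left)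
  qed
  have cbh: "b (s + 1 - k) * B (c (s + 1 - k)) = b k * B (c k)" if k: "k \<in> {1..s}" for k
  proof -
    have ck: "c k \<in> {0..1}" using nodes k by auto
    show ?thesis unfolding symc[OF k] symb[OF k] using hB[OF ck] by simp
  qed
  show ?thesis
  proof (intro allI)
    fix f :: "real \<Rightarrow> real^'d \<Rightarrow> real^'d"
    have G: "rkn_step s (\<lambda>i j. b j * Abar (c i) (c j)) (\<lambda>i. b i * Bbar (c i))
             (\<lambda>i. b i * B (c i)) (\<lambda>i. C (c i)) f (-h) (t0 + h) q1 p1 q0 p0"
      if "rkn_step s (\<lambda>i j. b j * Abar (c i) (c j)) (\<lambda>i. b i * Bbar (c i))
             (\<lambda>i. b i * B (c i)) (\<lambda>i. C (c i)) f h t0 q0 p0 q1 p1" for h t0 q0 p0 q1 p1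
      apply (rule gen_sym[OF _ _ _ _ that])
      using c1 ca cbb cbh by auto
    show "rkn_symmetric_for s (\<lambda>i j. b j * Abar (c i) (c j)) (\<lambda>i. b i * Bbar (c i))
             (\<lambda>i. b i * B (c i)) (\<lambda>i. C (c i)) f"
      unfolding rkn_symmetric_for_def
    proof (intro allI iffI)
      fix h t0 q0 p0 q1 p1
      assume "rkn_step s (\<lambda>i j. b j * Abar (c i) (c j)) (\<lambda>i. b i * Bbar (c i))
             (\<lambda>i. b i * B (c i)) (\<lambda>i. C (c i)) f h t0 q0 p0 q1 p1"
      thus "rkn_step s (\<lambda>i j. b j * Abar (c i) (c j)) (\<lambda>i. b i * Bbar (c i))
             (\<lambda>i. b i * B (c i)) (\<lambda>i. C (c i)) f (-h) (t0 + h) q1 p1 q0 p0" by (rule G)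
    next
      fix h t0 q0 p0 q1 p1
      assume "rkn_step s (\<lambda>i j. b j * Abar (c i) (c j)) (\<lambda>i. b i * Bbar (c i))
             (\<lambda>i. b i * B (c i)) (\<lambda>i. C (c i)) f (-h) (t0 + h) q1 p1 q0 p0"
      from G[OF this] show "rkn_step s (\<lambda>i j. b j * Abar (c i) (c j)) (\<lambda>i. b i * Bbar (c i))
             (\<lambda>i. b i * B (c i)) (\<lambda>i. C (c i)) f h t0 q0 p0 q1 p1" by simp
    qed
  qed
qed

end
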